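(* Let $G$ be a graph and $v\in V(G)$. Then \[ |M_{G-v}|+\alpha(v;G)\le |M_G|\le |M_{G-v}|+\sum_{p\in N(v)}|M_{G-(N[v]\cup N[p])}|. \] Furthermore, equality holds in the first inequality if and only if $\beta(v;G)=\varphi(v;G)$, and equality holds in the second inequality if and only if $\varphi(v;G)=0$.
   Context: Graphs are finite, simple, undirected. An induced matching is a matching whose endpoints induce a $1$-regular subgraph; it is maximal if not properly contained in another induced matching; $M_G$ is the set of maximal induced matchings of $G$ (a graph with no edges has exactly one, the empty matching). For $S\subseteq V(G)$, $G-S$ is the subgraph induced by $V(G)\setminus S$. $M_G(\emptyset,\{v\})$ is the set of maximal induced matchings of $G$ covering $v$. $\alpha(v;G)$ is the number of $M\in M_G(\emptyset,\{v\})$ such that removing from $M$ the edge incident with $v$ yields an induced matching that is not maximal in $G-v$; $\beta(v;G)$ is the number of $M\in M_G(\emptyset,\{v\})$ such that removing the edge incident with $v$ yields a maximal induced matching of $G-v$. $\varphi(v;G)$ is the number of maximal induced matchings of $G-v$ that are not maximal induced matchings of $G$. *)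

theory Defs
  imports Main
begin

definition graph :: "'a set \<Rightarrow> 'a set set \<Rightarrow> bool" where
  "graph V E \<longleftrightarrow> finite V \<and> (\<forall>e\<in>E. \<exists>x y. x \<noteq> y \<and> e = {x, y} \<and> x \<in> V \<and> y \<in> V)"

definition del_verts :: "'a set \<Rightarrow> 'a set set \<Rightarrow> 'a set \<Rightarrow> 'a set \<times> 'a set set" where
  "del_verts V E S = (V - S, {e \<in> E. e \<subseteq> V - S})"

definition nbhd :: "'a set set \<Rightarrow> 'a \<Rightarrow> 'a set" where
  "nbhd E v = {u. {u, v} \<in> E}"

definition closed_nbhd :: "'a set set \<Rightarrow> 'a \<Rightarrow> 'a set" where
  "closed_nbhd E v = insert v (nbhd E v)"

text \<open>An induced matching: a set of pairwise disjoint edges whose endpoints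
  induce a 1-regular subgraph, i.e. every edge of G between covered vertices
  belongs to M.\<close>
definition induced_matching :: "'a set set \<Rightarrow> 'a set set \<Rightarrow> bool" where
  "induced_matching E M \<longleftrightarrow> M \<subseteq> E \<and>
     (\<forall>e\<in>M. \<forall>f\<in>M. e \<noteq> f \<longrightarrow> e \<inter> f = {}) \<and>
     (\<forall>e\<in>E. e \<subseteq> \<Union>M \<longrightarrow> e \<in> M)"

definition maximal_induced_matching :: "'a set set \<Rightarrow> 'a set set \<Rightarrow> bool" where
  "maximal_induced_matching E M \<longleftrightarrow> induced_matching E M \<and>
     \<not> (\<exists>M'. induced_matching E M' \<and> M \<subset> M')"

definition MIM :: "'a set \<Rightarrow> 'a set set \<Rightarrow> 'a set set set" where
  "MIM V E = {M. maximal_induced_matching E M}"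

definition MIM_del :: "'a set \<Rightarrow> 'a set set \<Rightarrow> 'a set \<Rightarrow> 'a set set set" where
  "MIM_del V E S = (case del_verts V E S of (V', E') \<Rightarrow> MIM V' E')"

definition MIM_cov :: "'a set \<Rightarrow> 'a set set \<Rightarrow> 'a \<Rightarrow> 'a set set set" where
  "MIM_cov V E v = {M \<in> MIM V E. v \<in> \<Union>M}"

definition drop_edge_at :: "'a \<Rightarrow> 'a set set \<Rightarrow> 'a set set" where
  "drop_edge_at v M = {e \<in> M. v \<notin> e}"

definition alpha_v :: "'a \<Rightarrow> 'a set \<Rightarrow> 'a set set \<Rightarrow> nat" where
  "alpha_v v V E = card {M \<in> MIM_cov V E v. drop_edge_at v M \<notin> MIM_del V E {v}}"

definition beta_v :: "'a \<Rightarrow> 'a set \<Rightarrow> 'a set set \<Rightarrow> nat" where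
  "beta_v v V E = card {M \<in> MIM_cov V E v. drop_edge_at v M \<in> MIM_del V E {v}}"

definition phi_v :: "'a \<Rightarrow> 'a set \<Rightarrow> 'a set set \<Rightarrow> nat" where
  "phi_v v V E = card {M \<in> MIM_del V E {v}. M \<notin> MIM V E}"

end

theory Submission
  imports Defs
begin

lemma graph_edge: "graph V E \<Longrightarrow> e \<in> E \<Longrightarrow> \<exists>x y. x \<noteq> y \<and> e = {x, y} \<and> x \<in> V \<and> y \<in> V"
  unfolding graph_def by blast

lemma graph_sub: "graph V E \<Longrightarrow> e \<in> E \<Longrightarrow> e \<subseteq> V"
  using graph_edge by fastforce

lemma K_a:
  assumes g: "graph V E" and e: "{p,v} \<in> E" and im: "induced_matching E M0"
    and sub: "\<Union>M0 \<subseteq> V - (closed_nbhd E v \<union> closed_nbhd E p)"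
  shows "induced_matching E (insert {v,p} M0)"
proof -
  have vp: "v \<noteq> p" using graph_edge[OF g e] by (auto simp: doubleton_eq_iff)
  have e': "{v,p} \<in> E" using e by (simp add: insert_commute)
  have nv: "v \<notin> \<Union>M0" "p \<notin> \<Union>M0" using sub unfolding closed_nbhd_def by auto
  have nw: "\<And>w. {w,v} \<in> E \<Longrightarrow> w \<notin> \<Union>M0" "\<And>w. {w,p} \<in> E \<Longrightarrow> w \<notin> \<Union>M0"
    using sub unfolding closed_nbhd_def nbhd_def by auto
  have ind: "f \<in> insert {v,p} M0" if f: "f \<in> E" "f \<subseteq> \<Union>(insert {v,p} M0)" for f
  proof -
    obtain x y where xy: "x \<noteq> y" "f = {x,y}" using graph_edge[OF g f(1)] by blast
    show ?thesis
    proof (cases "x \<in> \<Union>M0 \<and> y \<in> \<Union>M0")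
      case True
      hence "f \<subseteq> \<Union>M0" using xy by auto
      thus ?thesis using im f(1) unfolding induced_matching_def by blast
    next
      case False
      have fE: "{x,y} \<in> E" "{y,x} \<in> E" using f xy by (auto simp: insert_commute)
      have "x \<in> {v,p} \<or> y \<in> {v,p}" using False f(2) xy by auto
      hence "x \<in> {v,p} \<and> y \<in> {v,p}"
        using nw fE f(2) xy by auto
      hence "f = {v,p}" using xy vp by auto
      thus ?thesis by simp
    qed
  qed
  show ?thesis unfolding induced_matching_def
  proof (intro conjI ballI impI)
    show "insert {v,p} M0 \<subseteq> E" using e' im unfolding induced_matching_def by blast
  next
    fix a b assume ab: "a \<in> insert {v,p} M0" "b \<in> insert {v,p} M0" "a \<noteq> b"
    have d: "\<And>c. c \<in> M0 \<Longrightarrow> {v,p} \<inter> c = {}" using nv by blast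
    have dis0: "\<And>a b. a \<in> M0 \<Longrightarrow> b \<in> M0 \<Longrightarrow> a \<noteq> b \<Longrightarrow> a \<inter> b = {}"
      using im unfolding induced_matching_def by blast
    show "a \<inter> b = {}"
    proof (cases "a = {v,p}")
      case True
      hence "b \<in> M0" using ab by auto
      thus ?thesis using d True by blast
    next
      case False
      hence a0: "a \<in> M0" using ab by auto
      show ?thesis
      proof (cases "b = {v,p}")
        case True thus ?thesis using d[OF a0] by blast
      next
        case False thus ?thesis using ab a0 dis0 by auto
      qed
    qed
  next
    fix f assume "f \<in> E" "f \<subseteq> \<Union>(insert {v,p} M0)" thus "f \<in> insert {v,p} M0" by (rule ind)
  qed
qed

lemma K_b:
  assumes g: "graph V E" and e: "{p,v} \<in> E" and im: "induced_matching E M"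
    and vpM: "{v,p} \<in> M"
  shows "\<Union>(M - {{v,p}}) \<subseteq> V - (closed_nbhd E v \<union> closed_nbhd E p)"
proof
  fix x assume "x \<in> \<Union>(M - {{v,p}})"
  then obtain f where f: "f \<in> M" "f \<noteq> {v,p}" "x \<in> f" by blast
  have ME: "M \<subseteq> E" and dis: "\<And>a b. a \<in> M \<Longrightarrow> b \<in> M \<Longrightarrow> a \<noteq> b \<Longrightarrow> a \<inter> b = {}"
    and cl: "\<And>a. a \<in> E \<Longrightarrow> a \<subseteq> \<Union>M \<Longrightarrow> a \<in> M"
    using im unfolding induced_matching_def by blast+
  have vp: "v \<noteq> p" using graph_edge[OF g e] by (auto simp: doubleton_eq_iff)
  have xV: "x \<in> V" using graph_sub[OF g] ME f by blast
  have fvp: "f \<inter> {v,p} = {}" using dis[OF f(1) vpM f(2)] .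
  have xv: "x \<noteq> v" "x \<noteq> p" using fvp f(3) by auto
  have "{x,v} \<notin> E"
  proof
    assume xvE: "{x,v} \<in> E"
    have "{x,v} \<subseteq> \<Union>M" using f vpM by blast
    hence inM: "{x,v} \<in> M" using cl xvE by blast
    have "{x,v} \<noteq> {v,p}" using xv by (auto simp: doubleton_eq_iff)
    from dis[OF inM vpM this] show False by blast
  qed
  moreover have "{x,p} \<notin> E"
  proof
    assume xvE: "{x,p} \<in> E"
    have "{x,p} \<subseteq> \<Union>M" using f vpM by blast
    hence inM: "{x,p} \<in> M" using cl xvE by blast
    have "{x,p} \<noteq> {v,p}" using xv by (auto simp: doubleton_eq_iff)
    from dis[OF inM vpM this] show False by blast
  qed
  ultimately show "x \<in> V - (closed_nbhd E v \<union> closed_nbhd E p)"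
    using xV xv unfolding closed_nbhd_def nbhd_def by auto
qed

lemma im_restrict:
  "induced_matching {e\<in>E. e \<subseteq> W} M \<longleftrightarrow> induced_matching E M \<and> \<Union>M \<subseteq> W"
  unfolding induced_matching_def
proof safe
  fix e x assume "M \<subseteq> {e \<in> E. e \<subseteq> W}" "e \<in> M" "x \<in> e" thus "x \<in> W" by blast
next
  fix e assume "M \<subseteq> {e \<in> E. e \<subseteq> W}" "\<forall>e\<in>{e \<in> E. e \<subseteq> W}. e \<subseteq> \<Union> M \<longrightarrow> e \<in> M"
     "e \<in> E" "e \<subseteq> \<Union> M"
  thus "e \<in> M" by blast
qed auto

lemma mim_restrict:
  "maximal_induced_matching {e\<in>E. e \<subseteq> W} M \<longleftrightarrow> induced_matching E M \<and> \<Union>M \<subseteq> W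
     \<and> \<not>(\<exists>M'. induced_matching E M' \<and> \<Union>M' \<subseteq> W \<and> M \<subset> M')"
  unfolding maximal_induced_matching_def im_restrict by simp

lemma MIM_del_eq:
  "MIM_del V E S = {M. induced_matching E M \<and> \<Union>M \<subseteq> V - S
     \<and> \<not>(\<exists>M'. induced_matching E M' \<and> \<Union>M' \<subseteq> V - S \<and> M \<subset> M')}"
proof -
  have "MIM_del V E S = {M. maximal_induced_matching {e\<in>E. e \<subseteq> V - S} M}"
    by (simp add: MIM_del_def del_verts_def MIM_def)
  also have "\<dots> = {M. induced_matching E M \<and> \<Union>M \<subseteq> V - S
     \<and> \<not>(\<exists>M'. induced_matching E M' \<and> \<Union>M' \<subseteq> V - S \<and> M \<subset> M')}"
    by (simp only: mim_restrict)
  finally show ?thesis .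
qed

lemma graph_finE: "graph V E \<Longrightarrow> finite E"
proof -
  assume g: "graph V E"
  hence "E \<subseteq> Pow V" using graph_sub by blast
  moreover have "finite V" using g graph_def by blast
  ultimately show ?thesis using finite_subset by blast
qed

lemma im_subset:
  assumes g: "graph V E" and im: "induced_matching E M" and NM: "N \<subseteq> M"
  shows "induced_matching E N"
proof -
  have ME: "M \<subseteq> E" and dis: "\<And>a b. a \<in> M \<Longrightarrow> b \<in> M \<Longrightarrow> a \<noteq> b \<Longrightarrow> a \<inter> b = {}"
    and cl: "\<And>a. a \<in> E \<Longrightarrow> a \<subseteq> \<Union>M \<Longrightarrow> a \<in> M"
    using im unfolding induced_matching_def by blast+
  have "f \<in> N" if f: "f \<in> E" "f \<subseteq> \<Union>N" for f
  proof -
    have "\<Union>N \<subseteq> \<Union>M" using NM by blast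
    hence fM: "f \<in> M" using cl f by blast
    obtain x y where "x \<noteq> y" "f = {x,y}" using graph_edge[OF g f(1)] by blast
    hence "x \<in> f" by simp
    hence "x \<in> \<Union>N" using f(2) by blast
    then obtain h where h: "x \<in> h" "h \<in> N" by blast
    have "h \<in> M" using h NM by blast
    have "f = h"
    proof (rule ccontr)
      assume "f \<noteq> h"
      from dis[OF fM \<open>h \<in> M\<close> this] h \<open>x \<in> f\<close> show False by blast
    qed
    thus ?thesis using h by simp
  qed
  moreover have "N \<subseteq> E" using ME NM by blast
  moreover have "\<forall>a\<in>N. \<forall>b\<in>N. a \<noteq> b \<longrightarrow> a \<inter> b = {}" using dis NM by blast
  ultimately show ?thesis unfolding induced_matching_def by blast
qed

lemma extend_max:
  assumes fin: "finite E" and im: "induced_matching E M"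
  shows "\<exists>M'. M \<subseteq> M' \<and> maximal_induced_matching E M'"
  using im
proof (induction "card E - card M" arbitrary: M rule: less_induct)
  case less
  show ?case
  proof (cases "maximal_induced_matching E M")
    case True thus ?thesis by blast
  next
    case False
    then obtain M1 where M1: "induced_matching E M1" "M \<subset> M1"
      using less.prems unfolding maximal_induced_matching_def by blast
    have "M1 \<subseteq> E" using M1 unfolding induced_matching_def by blast
    hence "card M < card M1" "card M1 \<le> card E"
      using M1(2) fin by (auto intro: psubset_card_mono card_mono finite_subset)
    hence "card E - card M1 < card E - card M" by linarith
    from less.hyps[OF this M1(1)] M1(2) show ?thesis by blast
  qed
qed


lemma im_sub_E: "induced_matching E M \<Longrightarrow> M \<subseteq> E"
  unfolding induced_matching_def by blast

lemma max_imp_im: "maximal_induced_matching E M \<Longrightarrow> induced_matching E M"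
  unfolding maximal_induced_matching_def by blast

lemma max_no_ext: "maximal_induced_matching E M \<Longrightarrow> induced_matching E M' \<Longrightarrow> M \<subset> M' \<Longrightarrow> False"
  unfolding maximal_induced_matching_def by blast

lemma Bp_eq:
  assumes g: "graph V E" and e: "{p,v} \<in> E"
  shows "{M \<in> MIM V E. {v,p} \<in> M}
     = insert {v,p} ` MIM_del V E (closed_nbhd E v \<union> closed_nbhd E p)"
proof -
  define W where "W = V - (closed_nbhd E v \<union> closed_nbhd E p)"
  have vW: "v \<notin> W" unfolding W_def closed_nbhd_def by blast
  have eW: "{v,p} \<notin> M0" if "\<Union>M0 \<subseteq> W" for M0 using that vW by blast
  have MD: "MIM_del V E (closed_nbhd E v \<union> closed_nbhd E p) = {M. induced_matching E M \<and> \<Union>M \<subseteq> W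
     \<and> \<not>(\<exists>M'. induced_matching E M' \<and> \<Union>M' \<subseteq> W \<and> M \<subset> M')}"
    unfolding W_def by (rule MIM_del_eq)
  show ?thesis
  proof
    show "{M \<in> MIM V E. {v,p} \<in> M} \<subseteq> insert {v,p} ` MIM_del V E (closed_nbhd E v \<union> closed_nbhd E p)"
    proof
      fix M assume M: "M \<in> {M \<in> MIM V E. {v,p} \<in> M}"
      hence mx: "maximal_induced_matching E M" and eM: "{v,p} \<in> M" unfolding MIM_def by auto
      have im: "induced_matching E M" using max_imp_im[OF mx] .
      define M0 where "M0 = M - {{v,p}}"
      have MM0: "M = insert {v,p} M0" unfolding M0_def using eM by blast
      have im0: "induced_matching E M0" using im_subset[OF g im] unfolding M0_def by blast
      have W0: "\<Union>M0 \<subseteq> W" unfolding M0_def W_def using K_b[OF g e im eM] .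
      have "\<not>(\<exists>M'. induced_matching E M' \<and> \<Union>M' \<subseteq> W \<and> M0 \<subset> M')"
      proof
        assume "\<exists>M'. induced_matching E M' \<and> \<Union>M' \<subseteq> W \<and> M0 \<subset> M'"
        then obtain M' where M': "induced_matching E M'" "\<Union>M' \<subseteq> W" "M0 \<subset> M'" by blast
        have im': "induced_matching E (insert {v,p} M')"
          using K_a[OF g e M'(1)] M'(2) unfolding W_def by blast
        have "{v,p} \<notin> M'" using eW[OF M'(2)] .
        obtain x where x: "x \<in> M'" "x \<notin> M0" using M'(3) by blast
        have "x \<noteq> {v,p}" using x \<open>{v,p} \<notin> M'\<close> by metis
        hence "x \<notin> M" using x MM0 by simp
        moreover have "M \<subseteq> insert {v,p} M'" using MM0 M'(3) by auto
        ultimately have "M \<subset> insert {v,p} M'" using x by blast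
        thus False using max_no_ext[OF mx im'] by blast
      qed
      hence "M0 \<in> MIM_del V E (closed_nbhd E v \<union> closed_nbhd E p)"
        unfolding MD using im0 W0 by simp
      thus "M \<in> insert {v,p} ` MIM_del V E (closed_nbhd E v \<union> closed_nbhd E p)"
        using MM0 by blast
    qed
  next
    show "insert {v,p} ` MIM_del V E (closed_nbhd E v \<union> closed_nbhd E p) \<subseteq> {M \<in> MIM V E. {v,p} \<in> M}"
    proof
      fix M assume "M \<in> insert {v,p} ` MIM_del V E (closed_nbhd E v \<union> closed_nbhd E p)"
      then obtain M0 where M0: "M0 \<in> MIM_del V E (closed_nbhd E v \<union> closed_nbhd E p)"
        and MM0: "M = insert {v,p} M0" by blast
      have im0: "induced_matching E M0" and W0: "\<Union>M0 \<subseteq> W"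
        and mx0: "\<not>(\<exists>M'. induced_matching E M' \<and> \<Union>M' \<subseteq> W \<and> M0 \<subset> M')"
        using M0 unfolding MD by auto
      have im: "induced_matching E M" using K_a[OF g e im0] W0 MM0 unfolding W_def by blast
      have e0: "{v,p} \<notin> M0" using eW[OF W0] .
      have "\<not>(\<exists>M'. induced_matching E M' \<and> M \<subset> M')"
      proof
        assume "\<exists>M'. induced_matching E M' \<and> M \<subset> M'"
        then obtain M' where M': "induced_matching E M'" "M \<subset> M'" by blast
        have eM': "{v,p} \<in> M'" using M'(2) MM0 by blast
        have im': "induced_matching E (M' - {{v,p}})" using im_subset[OF g M'(1)] by blast
        have W': "\<Union>(M' - {{v,p}}) \<subseteq> W" unfolding W_def using K_b[OF g e M'(1) eM'] .
        obtain x where x: "x \<in> M'" "x \<notin> M" using M'(2) by blast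
        have "x \<noteq> {v,p}" using x MM0 by auto
        hence "x \<in> M' - {{v,p}}" "x \<notin> M0" using x MM0 by auto
        moreover have "M0 \<subseteq> M' - {{v,p}}" using M'(2) MM0 e0 by auto
        ultimately have "M0 \<subset> M' - {{v,p}}" by blast
        thus False using mx0 im' W' by blast
      qed
      hence "M \<in> MIM V E" unfolding MIM_def maximal_induced_matching_def using im by blast
      thus "M \<in> {M \<in> MIM V E. {v,p} \<in> M}" using MM0 by blast
    qed
  qed
qed

lemma phi_lem:
  assumes g: "graph V E" and M: "M \<in> MIM_del V E {v}" and nM: "M \<notin> MIM V E"
  shows "\<exists>M''. M'' \<in> MIM_cov V E v \<and> drop_edge_at v M'' = M"
proof -
  have MM: "M \<in> {M. induced_matching E M \<and> \<Union>M \<subseteq> V - {v}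
     \<and> \<not>(\<exists>M'. induced_matching E M' \<and> \<Union>M' \<subseteq> V - {v} \<and> M \<subset> M')}"
    using M MIM_del_eq[of V E "{v}"] by simp
  have im: "induced_matching E M" and W: "\<Union>M \<subseteq> V - {v}"
    and mx: "\<And>M'. induced_matching E M' \<Longrightarrow> \<Union>M' \<subseteq> V - {v} \<Longrightarrow> M \<subset> M' \<Longrightarrow> False"
    using MM by auto
  have "\<not> maximal_induced_matching E M" using nM unfolding MIM_def by simp
  then obtain M1 where M1: "induced_matching E M1" "M \<subset> M1"
    using im unfolding maximal_induced_matching_def by auto
  obtain M2 where M2: "M1 \<subseteq> M2" "maximal_induced_matching E M2"
    using extend_max[OF graph_finE[OF g] M1(1)] by auto
  have im2: "induced_matching E M2" using max_imp_im[OF M2(2)] .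
  have M2E: "M2 \<subseteq> E" using im_sub_E[OF im2] .
  have M2V: "\<Union>M2 \<subseteq> V"
  proof
    fix x assume "x \<in> \<Union>M2"
    then obtain f where "f \<in> M2" "x \<in> f" by auto
    thus "x \<in> V" using graph_sub[OF g] M2E by auto
  qed
  have MM2: "M \<subset> M2" using M1(2) M2(1) by (rule psubset_subset_trans)
  have cov: "v \<in> \<Union>M2"
  proof (rule ccontr)
    assume "v \<notin> \<Union>M2"
    hence "\<Union>M2 \<subseteq> V - {v}" using M2V by auto
    thus False using mx[OF im2 _ MM2] by simp
  qed
  define D where "D = drop_edge_at v M2"
  have DM2: "D \<subseteq> M2" unfolding D_def drop_edge_at_def by auto
  have imD: "induced_matching E D" using im_subset[OF g im2 DM2] .
  have WD: "\<Union>D \<subseteq> V - {v}" using M2V unfolding D_def drop_edge_at_def by auto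
  have MD: "M \<subseteq> D"
  proof
    fix f assume f: "f \<in> M"
    hence "f \<in> M2" using MM2 by auto
    moreover have "v \<notin> f" using f W by auto
    ultimately show "f \<in> D" unfolding D_def drop_edge_at_def by simp
  qed
  have "D = M"
  proof (rule ccontr)
    assume "D \<noteq> M"
    hence "M \<subset> D" using MD by auto
    thus False using mx[OF imD WD] by simp
  qed
  moreover have "M2 \<in> MIM_cov V E v" unfolding MIM_cov_def MIM_def using M2(2) cov by simp
  ultimately show ?thesis unfolding D_def by auto
qed


lemma finite_MIM: "graph V E \<Longrightarrow> finite (MIM V E)"
proof -
  assume g: "graph V E"
  have "MIM V E \<subseteq> Pow E"
  proof
    fix M assume "M \<in> MIM V E"
    hence "induced_matching E M" unfolding MIM_def using max_imp_im by simp
    thus "M \<in> Pow E" using im_sub_E by simp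
  qed
  thus ?thesis using graph_finE[OF g] finite_subset by blast
qed

lemma finite_MIM_del: "graph V E \<Longrightarrow> finite (MIM_del V E S)"
proof -
  assume g: "graph V E"
  have "MIM_del V E S \<subseteq> Pow E"
  proof
    fix M assume "M \<in> MIM_del V E S"
    hence "induced_matching E M" unfolding MIM_del_eq by simp
    thus "M \<in> Pow E" using im_sub_E by simp
  qed
  thus ?thesis using graph_finE[OF g] finite_subset by blast
qed

lemma cov_card:
  assumes g: "graph V E"
  shows "card (MIM_cov V E v) = (\<Sum>p\<in>nbhd E v. card (MIM_del V E (closed_nbhd E v \<union> closed_nbhd E p)))"
proof -
  define B where "B p = {M \<in> MIM V E. {v,p} \<in> M}" for p
  have cov: "MIM_cov V E v = (\<Union>p\<in>nbhd E v. B p)"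
  proof
    show "MIM_cov V E v \<subseteq> (\<Union>p\<in>nbhd E v. B p)"
    proof
      fix M assume M: "M \<in> MIM_cov V E v"
      then obtain f where f: "f \<in> M" "v \<in> f" and MG: "M \<in> MIM V E" unfolding MIM_cov_def by auto
      have "induced_matching E M" using MG max_imp_im unfolding MIM_def by simp
      hence "f \<in> E" using f im_sub_E by auto
      then obtain x y where xy: "x \<noteq> y" "f = {x,y}" using graph_edge[OF g] by blast
      obtain p where p: "f = {v,p}" using xy f(2) by (auto simp: insert_commute)
      have "{p,v} \<in> E" using \<open>f \<in> E\<close> p by (simp add: insert_commute)
      hence "p \<in> nbhd E v" unfolding nbhd_def by simp
      moreover have "M \<in> B p" unfolding B_def using MG f p by simp
      ultimately show "M \<in> (\<Union>p\<in>nbhd E v. B p)" by auto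
    qed
  next
    show "(\<Union>p\<in>nbhd E v. B p) \<subseteq> MIM_cov V E v"
      unfolding B_def MIM_cov_def by auto
  qed
  have finN: "finite (nbhd E v)"
  proof -
    have "nbhd E v \<subseteq> V" unfolding nbhd_def using graph_sub[OF g] by auto
    moreover have "finite V" using g unfolding graph_def by simp
    ultimately show ?thesis using finite_subset by blast
  qed
  have finB: "\<forall>p\<in>nbhd E v. finite (B p)"
    unfolding B_def using finite_MIM[OF g] by auto
  have disj: "\<forall>p\<in>nbhd E v. \<forall>q\<in>nbhd E v. p \<noteq> q \<longrightarrow> B p \<inter> B q = {}"
  proof (intro ballI impI)
    fix p q assume p: "p \<in> nbhd E v" and q: "q \<in> nbhd E v" and pq: "p \<noteq> q"
    show "B p \<inter> B q = {}"
    proof (rule ccontr)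
      assume "B p \<inter> B q \<noteq> {}"
      then obtain M where "M \<in> B p" "M \<in> B q" by blast
      hence M: "M \<in> MIM V E" "{v,p} \<in> M" "{v,q} \<in> M" unfolding B_def by auto
      have im: "induced_matching E M" using M(1) max_imp_im unfolding MIM_def by simp
      have "{v,p} \<noteq> {v,q}"
      proof
        assume "{v,p} = {v,q}"
        hence "p = q \<or> p = v" by (auto simp: doubleton_eq_iff)
        moreover have "{p,v} \<in> E" using p unfolding nbhd_def by simp
        hence "p \<noteq> v" using graph_edge[OF g, of "{p,v}"] by (auto simp: doubleton_eq_iff)
        ultimately show False using pq by simp
      qed
      moreover have "\<And>a b. a \<in> M \<Longrightarrow> b \<in> M \<Longrightarrow> a \<noteq> b \<Longrightarrow> a \<inter> b = {}"
        using im unfolding induced_matching_def by blast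
      ultimately have "{v,p} \<inter> {v,q} = {}" using M by blast
      thus False by simp
    qed
  qed
  have "card (MIM_cov V E v) = (\<Sum>p\<in>nbhd E v. card (B p))"
    unfolding cov using card_UN_disjoint[OF finN finB disj] by simp
  also have "\<dots> = (\<Sum>p\<in>nbhd E v. card (MIM_del V E (closed_nbhd E v \<union> closed_nbhd E p)))"
  proof (rule sum.cong)
    fix p assume p: "p \<in> nbhd E v"
    hence e: "{p,v} \<in> E" unfolding nbhd_def by simp
    have Bp: "B p = insert {v,p} ` MIM_del V E (closed_nbhd E v \<union> closed_nbhd E p)"
      unfolding B_def using Bp_eq[OF g e] .
    have nin: "{v,p} \<notin> M0" if "M0 \<in> MIM_del V E (closed_nbhd E v \<union> closed_nbhd E p)" for M0
    proof -
      have "\<Union>M0 \<subseteq> V - (closed_nbhd E v \<union> closed_nbhd E p)"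
        using that unfolding MIM_del_eq by auto
      moreover have "v \<in> closed_nbhd E v" unfolding closed_nbhd_def by simp
      ultimately show ?thesis by blast
    qed
    have "inj_on (insert {v,p}) (MIM_del V E (closed_nbhd E v \<union> closed_nbhd E p))"
    proof (rule inj_onI)
      fix X Y assume X: "X \<in> MIM_del V E (closed_nbhd E v \<union> closed_nbhd E p)"
        and Y: "Y \<in> MIM_del V E (closed_nbhd E v \<union> closed_nbhd E p)"
        and XY: "insert {v,p} X = insert {v,p} Y"
      have "X = insert {v,p} X - {{v,p}}" using nin[OF X] by simp
      also have "\<dots> = insert {v,p} Y - {{v,p}}" using XY by simp
      also have "\<dots> = Y" using nin[OF Y] by simp
      finally show "X = Y" .
    qed
    thus "card (B p) = card (MIM_del V E (closed_nbhd E v \<union> closed_nbhd E p))"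
      unfolding Bp by (rule card_image)
  qed simp
  finally show ?thesis .
qed

theorem proposition2p5:
  fixes V :: "'a set" and E :: "'a set set" and v :: 'a
  assumes "graph V E" and "v \<in> V"
  shows "card (MIM_del V E {v}) + alpha_v v V E \<le> card (MIM V E)
    \<and> card (MIM V E) \<le> card (MIM_del V E {v})
        + (\<Sum>p\<in>nbhd E v. card (MIM_del V E (closed_nbhd E v \<union> closed_nbhd E p)))
    \<and> (card (MIM_del V E {v}) + alpha_v v V E = card (MIM V E) \<longleftrightarrow> beta_v v V E = phi_v v V E)
    \<and> (card (MIM V E) = card (MIM_del V E {v})
        + (\<Sum>p\<in>nbhd E v. card (MIM_del V E (closed_nbhd E v \<union> closed_nbhd E p)))
       \<longleftrightarrow> phi_v v V E = 0)"
proof -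
  note g = assms(1)
  define A where "A = {M \<in> MIM V E. v \<notin> \<Union>M}"
  define Al where "Al = {M \<in> MIM_cov V E v. drop_edge_at v M \<notin> MIM_del V E {v}}"
  define Be where "Be = {M \<in> MIM_cov V E v. drop_edge_at v M \<in> MIM_del V E {v}}"
  define Ph where "Ph = {M \<in> MIM_del V E {v}. M \<notin> MIM V E}"
  have finG: "finite (MIM V E)" using finite_MIM[OF g] .
  have finD: "finite (MIM_del V E {v})" using finite_MIM_del[OF g] .
  have finC: "finite (MIM_cov V E v)" using finG unfolding MIM_cov_def by simp
  have c1: "card (MIM V E) = card A + card (MIM_cov V E v)"
  proof -
    have "MIM V E = A \<union> MIM_cov V E v" unfolding A_def MIM_cov_def by auto
    moreover have "A \<inter> MIM_cov V E v = {}" unfolding A_def MIM_cov_def by auto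
    moreover have "finite A" using finG unfolding A_def by simp
    ultimately show ?thesis using card_Un_disjoint finC by metis
  qed
  have c2: "card (MIM_cov V E v) = card Al + card Be"
  proof -
    have "MIM_cov V E v = Al \<union> Be" unfolding Al_def Be_def by auto
    moreover have "Al \<inter> Be = {}" unfolding Al_def Be_def by auto
    moreover have "finite Al" "finite Be" using finC unfolding Al_def Be_def by simp_all
    ultimately show ?thesis using card_Un_disjoint by metis
  qed
  have c3: "card (MIM_del V E {v}) = card A + card Ph"
  proof -
    have AD: "A \<subseteq> MIM_del V E {v}"
    proof
      fix M assume "M \<in> A"
      hence M: "maximal_induced_matching E M" "v \<notin> \<Union>M" unfolding A_def MIM_def by auto
      have im: "induced_matching E M" using max_imp_im[OF M(1)] .
      have "\<Union>M \<subseteq> V"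
      proof
        fix x assume "x \<in> \<Union>M"
        then obtain f where "f \<in> M" "x \<in> f" by auto
        thus "x \<in> V" using graph_sub[OF g] im_sub_E[OF im] by auto
      qed
      hence "\<Union>M \<subseteq> V - {v}" using M(2) by auto
      moreover have "\<not>(\<exists>M'. induced_matching E M' \<and> \<Union>M' \<subseteq> V - {v} \<and> M \<subset> M')"
        using max_no_ext[OF M(1)] by auto
      ultimately show "M \<in> MIM_del V E {v}" unfolding MIM_del_eq using im by simp
    qed
    have "MIM_del V E {v} = A \<union> Ph"
    proof
      show "MIM_del V E {v} \<subseteq> A \<union> Ph"
      proof
        fix M assume M: "M \<in> MIM_del V E {v}"
        hence "\<Union>M \<subseteq> V - {v}" unfolding MIM_del_eq by auto
        hence "v \<notin> \<Union>M" by auto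
        thus "M \<in> A \<union> Ph" using M unfolding A_def Ph_def by auto
      qed
      show "A \<union> Ph \<subseteq> MIM_del V E {v}" using AD unfolding Ph_def by auto
    qed
    moreover have "A \<inter> Ph = {}" unfolding A_def Ph_def by auto
    moreover have "finite A" "finite Ph" using finG finD unfolding A_def Ph_def by simp_all
    ultimately show ?thesis using card_Un_disjoint by metis
  qed
  have c4: "card Ph \<le> card Be"
  proof -
    have "Ph \<subseteq> drop_edge_at v ` Be"
    proof
      fix M assume "M \<in> Ph"
      hence M: "M \<in> MIM_del V E {v}" "M \<notin> MIM V E" unfolding Ph_def by auto
      obtain M'' where "M'' \<in> MIM_cov V E v" "drop_edge_at v M'' = M"
        using phi_lem[OF g M] by blast
      hence "M'' \<in> Be" using M(1) unfolding Be_def by simp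
      thus "M \<in> drop_edge_at v ` Be" using \<open>drop_edge_at v M'' = M\<close> by blast
    qed
    moreover have "finite Be" using finC unfolding Be_def by simp
    ultimately have "card Ph \<le> card (drop_edge_at v ` Be)" by (simp add: card_mono)
    also have "\<dots> \<le> card Be" by (rule card_image_le) (use finC in \<open>simp add: Be_def\<close>)
    finally show ?thesis .
  qed
  have c5: "card (MIM_cov V E v) = (\<Sum>p\<in>nbhd E v. card (MIM_del V E (closed_nbhd E v \<union> closed_nbhd E p)))"
    using cov_card[OF g] .
  have al: "alpha_v v V E = card Al" unfolding alpha_v_def Al_def ..
  have be: "beta_v v V E = card Be" unfolding beta_v_def Be_def ..
  have ph: "phi_v v V E = card Ph" unfolding phi_v_def Ph_def ..
  show ?thesis unfolding al be ph c5[symmetric] using c1 c2 c3 c4 by linarith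
qed

end
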